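(* Consider the following setting. Let $\mathcal{X}\subseteq\mathbb{R}^D$, $\mathcal{Y}=\{1,\dots,C\}$, $\mathcal{O}$ an output space, $f:\mathcal{X}\to\mathcal{O}$ a fixed deployed model, $\ell:\mathcal{O}\times\mathcal{Y}\to[0,1]$ a loss, and $f_{\mathrm{p}}$ a fixed predictive model; the synthetic label of $x$ is $\tilde y=\arg\max_c f_{\mathrm{p}}(x)[c]$. Let $P_0$ (source) and $P_1,P_2,\dots$ (test) be distributions on $\mathcal{X}\times\mathcal{Y}$, with $R_t=\mathbb{E}_{(x,y)\sim P_t}[\ell(f(x),y)]$ for $t\ge0$ and running test risk $\bar R_t=\frac1t\sum_{t'=1}^tR_{t'}$. At each time $t\ge1$, a labeled batch $\{(x_{t,i},y_{t,i})\}_{i=1}^{n_t}$ ($n_t\ge1$) i.i.d. from $P_t$ and an unlabeled batch $\{\tilde x_{t,j}\}_{j=n_t+1}^{n_t+N_t}$ ($N_t\ge1$) i.i.d. from the $\mathcal{X}$-marginal of $P_t$ are observed; source data (labeled and unlabeled) are drawn from $P_0$; all samples are mutually independent. Fix $\eta_{\max}>0$ and let $\{\eta_t\}_{t\ge1}$ with $\eta_t\in[0,\eta_{\max}]$ be any predictable sequence (each $\eta_t$ a function only of the data and synthetic labels observed at times $1,\dots,t-1$). Define the per-step estimate $$\hat R^{\mathrm{PP}}_t=\frac{\eta_t}{N_t}\sum_{j=n_t+1}^{n_t+N_t}\ell(f(\tilde x_{t,j}),\tilde y_{t,j})+\frac1{n_t}\sum_{i=1}^{n_t}\ell(f(x_{t,i}),y_{t,i})-\frac{\eta_t}{n_t}\sum_{i=1}^{n_t}\ell(f(x_{t,i}),\tilde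 y_{t,i}),$$ and $\hat{\bar R}^{\mathrm{PP}}_t=\frac1t\sum_{t'=1}^t\hat R^{\mathrm{PP}}_{t'}$. Let $Z_t=(\hat R^{\mathrm{PP}}_t+\eta_{\max})/(1+2\eta_{\max})\in[0,1]$, $\bar Z_t=\frac1t\sum_{t'=1}^tZ_{t'}$, $\bar Z_0$ a fixed constant in $[0,1]$, and $V_t^{\mathrm{PP}}=\sum_{t'=1}^t(Z_{t'}-\bar Z_{t'-1})^2$. Fix $\delta_{\mathrm S},\delta_{\mathrm T}\in(0,1)$ with $\delta_{\mathrm S}+\delta_{\mathrm T}\in(0,1)$, a probability distribution $q$ on $[0,1)$, let $\psi_E(\lambda)=-\log(1-\lambda)-\lambda$, and $u(V)=\sup\{S:\int_0^1q(\lambda)\exp(\lambda S-\psi_E(\lambda)V)\,d\lambda<1/\delta_{\mathrm T}\}$. Define the lower bound $L^{\mathrm{PP}}_t=\hat{\bar R}^{\mathrm{PP}}_t-(1+2\eta_{\max})\,u(V^{\mathrm{PP}}_t)/t$. Let $U_0^{\mathrm{PP}}$ be an upper bound on the source risk computed from the source data only and satisfying $\mathbb{P}(R_0\le U_0^{\mathrm{PP}})\ge1-\delta_{\mathrm S}$. For a tolerance $\epsilon_{\mathrm{tol}}>0$, define the alarm $\Phi^{\mathrm{PP}}_t=\mathbb{1}[L^{\mathrm{PP}}_t>U_0^{\mathrm{PP}}+\epsilon_{\mathrm{tol}}]$. Then for every sequence $P_1,P_2,\dots$ satisfying the null hypothesis $\mathcal{H}_0$: $\bar R_t\le R_0+\epsilon_{\mathrm{tol}}$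 for all $t\ge1$, $$\mathbb{P}\big(\exists\,t\ge1:\ \Phi^{\mathrm{PP}}_t=1\big)\le\delta_{\mathrm S}+\delta_{\mathrm T}.$$
   Context: This is the probability-of-false-alarm guarantee for prediction-powered risk monitoring (PPRM). In the paper, $U_0^{\mathrm{PP}}=\hat R_0^{\mathrm{PP}}+w_0^{\mathrm{PP}}$ where $\hat R_0^{\mathrm{PP}}$ is the analogous prediction-powered estimate on source data and $w_0^{\mathrm{PP}}$ is obtained from a betting-based confidence bound ensuring $\mathbb{P}(R_0\le U_0^{\mathrm{PP}})\ge1-\delta_{\mathrm S}$. *)

theory Defs
  imports "HOL-Probability.Probability"
begin

text \<open>Index of an observed sample: Lab t i is the i-th labeled sample (i < n t) of time t,
  Unl t j is the j-th unlabeled sample (j < N t) of time t.  Time 0 is the source.\<close>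
datatype sidx = Lab nat nat | Unl nat nat

fun sidx_time :: "sidx \<Rightarrow> nat" where
  "sidx_time (Lab t i) = t"
| "sidx_time (Unl t j) = t"

definition sample_index :: "(nat \<Rightarrow> nat) \<Rightarrow> (nat \<Rightarrow> nat) \<Rightarrow> sidx set" where
  "sample_index n N = {Lab t i | t i. i < n t} \<union> {Unl t j | t j. j < N t}"

definition sample_sets ::
  "'a measure \<Rightarrow> (nat \<Rightarrow> nat \<Rightarrow> 'a \<Rightarrow> real^'d) \<Rightarrow> (nat \<Rightarrow> nat \<Rightarrow> 'a \<Rightarrow> 'y)
    \<Rightarrow> (nat \<Rightarrow> nat \<Rightarrow> 'a \<Rightarrow> real^'d) \<Rightarrow> sidx \<Rightarrow> 'a set set" where
  "sample_sets M Xl Yl Xu k = (case k of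
      Lab t i \<Rightarrow> {(\<lambda>\<omega>. (Xl t i \<omega>, Yl t i \<omega>)) -` A \<inter> space M | A.
                    A \<in> sets (borel \<Otimes>\<^sub>M count_space UNIV)}
    | Unl t j \<Rightarrow> {Xu t j -` A \<inter> space M | A. A \<in> sets borel})"

definition data_sigma ::
  "'a measure \<Rightarrow> (nat \<Rightarrow> nat \<Rightarrow> 'a \<Rightarrow> real^'d) \<Rightarrow> (nat \<Rightarrow> nat \<Rightarrow> 'a \<Rightarrow> 'y)
    \<Rightarrow> (nat \<Rightarrow> nat \<Rightarrow> 'a \<Rightarrow> real^'d) \<Rightarrow> (nat \<Rightarrow> nat) \<Rightarrow> (nat \<Rightarrow> nat) \<Rightarrow> nat set \<Rightarrow> 'a measure" where
  "data_sigma M Xl Yl Xu n N T = sigma (space M)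
     (\<Union> {sample_sets M Xl Yl Xu k | k. k \<in> sample_index n N \<and> sidx_time k \<in> T})"

definition synth_label :: "(real^'d \<Rightarrow> 'y::finite \<Rightarrow> real) \<Rightarrow> real^'d \<Rightarrow> 'y" where
  "synth_label fp x = arg_max_on (fp x) UNIV"

definition psiE :: "real \<Rightarrow> real" where
  "psiE l = - ln (1 - l) - l"

definition u_bound :: "real measure \<Rightarrow> real \<Rightarrow> real \<Rightarrow> ereal" where
  "u_bound Q \<delta>T V = Sup {ereal S | S.
      (\<integral>\<^sup>+ l. ennreal (exp (l * S - psiE l * V)) \<partial>Q) < ennreal (1 / \<delta>T)}"

end

theory Submission
  imports Defs
begin


lemma psiE_ge:
  fixes l :: real assumes "0 \<le> l" "l < 1" shows "l^2/2 \<le> psiE l"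
proof -
  let ?g = "\<lambda>x::real. - ln (1 - x) - x - x^2/2"
  have "?g 0 \<le> ?g l"
  proof (rule DERIV_nonneg_imp_increasing_open[OF assms(1)])
    fix x assume x: "0 < x" "x < l"
    then have "1 - x > 0" using assms by simp
    have "DERIV ?g x :> (1/(1-x) - 1 - x)"
      using \<open>1 - x > 0\<close> by (auto intro!: derivative_eq_intros simp: field_simps power2_eq_square)
    moreover have "1/(1-x) - 1 - x \<ge> 0"
      using \<open>1 - x > 0\<close> x by (simp add: field_simps)
    ultimately show "\<exists>y. DERIV ?g x :> y \<and> 0 \<le> y" by blast
  next
    show "continuous_on {0..l} ?g"
      using assms by (auto intro!: continuous_intros)
  qed
  then show ?thesis by (simp add: psiE_def)
qed

lemma psiE_nonneg: fixes l :: real assumes "0 \<le> l" "l < 1" shows "0 \<le> psiE l"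
  using psiE_ge[OF assms] by (smt (verit) zero_le_power2 divide_nonneg_pos)

lemma fan_ineq:
  fixes l \<xi> :: real assumes l: "0 \<le> l" "l < 1" and xi: "-1 \<le> \<xi>"
  shows "exp (l * \<xi> - psiE l * \<xi>^2) \<le> 1 + l * \<xi>"
proof (cases "l = 0")
  case True then show ?thesis by (simp add: psiE_def)
next
  case False
  then have lpos: "l > 0" using l by simp
  define \<psi> where "\<psi> = psiE l"
  have psi2: "l^2 \<le> 2 * \<psi>" using psiE_ge[OF l] by (simp add: \<psi>_def)
  have pos: "\<And>x. -1 \<le> x \<Longrightarrow> 1 + l * x > 0"
  proof -
    fix x :: real assume "-1 \<le> x"
    then have "l * x \<ge> l * (-1)" using lpos by (intro mult_left_mono) auto
    then show "1 + l * x > 0" using l by simp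
  qed
  define h where "h = (\<lambda>x. \<psi> * x^2 - l * x + ln (1 + l * x))"
  have dh: "\<And>x. -1 \<le> x \<Longrightarrow> DERIV h x :> x * (2 * \<psi> * (1 + l * x) - l^2) / (1 + l * x)"
  proof -
    fix x :: real assume x: "-1 \<le> x"
    have "DERIV h x :> (\<psi> * (2 * x) - l + l / (1 + l * x))"
      unfolding h_def using pos[OF x]
      by (auto intro!: derivative_eq_intros simp: power2_eq_square field_simps)
    moreover have "\<psi> * (2 * x) - l + l / (1 + l * x) = x * (2 * \<psi> * (1 + l * x) - l^2) / (1 + l * x)"
      using pos[OF x] by (simp add: field_simps power2_eq_square)
    ultimately show "DERIV h x :> x * (2 * \<psi> * (1 + l * x) - l^2) / (1 + l * x)" by simp
  qed
  have cont: "\<And>a b. -1 \<le> a \<Longrightarrow> continuous_on {a..b} h"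
  proof -
    fix a b :: real assume "-1 \<le> a"
    then have "\<forall>x\<in>{a..b}. 0 < 1 + l * x" using pos by auto
    then show "continuous_on {a..b} h" unfolding h_def
      by (auto intro!: continuous_intros)
  qed
  have h0: "h 0 = 0" by (simp add: h_def)
  have hm1: "h (-1) = 0" by (simp add: h_def \<psi>_def psiE_def)
  have psinn: "0 \<le> \<psi>" using psi2 by (smt (verit) zero_le_power2)
  have "h \<xi> \<ge> 0"
  proof (cases "\<xi> \<ge> 0")
    case True
    have "h 0 \<le> h \<xi>"
    proof (rule DERIV_nonneg_imp_increasing_open[OF True _ cont])
      fix x assume x: "0 < x" "x < \<xi>"
      have "l * x \<ge> 0" using x lpos by simp
      then have "2 * \<psi> * (1 + l * x) \<ge> 2 * \<psi>" using mult_nonneg_nonneg[OF psinn \<open>l * x \<ge> 0\<close>] by (simp add: algebra_simps)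
      then have "x * (2 * \<psi> * (1 + l * x) - l^2) / (1 + l * x) \<ge> 0"
        using psi2 x pos[of x] by (intro divide_nonneg_pos mult_nonneg_nonneg) auto
      then show "\<exists>y. DERIV h x :> y \<and> 0 \<le> y" using dh[of x] x by auto
    qed simp
    then show ?thesis using h0 by simp
  next
    case False
    then have neg: "\<xi> < 0" by simp
    show ?thesis
    proof (cases "2 * \<psi> * (1 + l * \<xi>) - l^2 \<ge> 0")
      case True
      have "h \<xi> \<ge> h 0"
      proof (rule DERIV_nonpos_imp_decreasing_open[of \<xi> 0 h])
        fix x assume x: "\<xi> < x" "x < 0"
        have "l * \<xi> \<le> l * x" using x lpos by simp
        then have "2 * \<psi> * (1 + l * \<xi>) \<le> 2 * \<psi> * (1 + l * x)" using psinn by (simp add: mult_left_mono)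
        then have "x * (2 * \<psi> * (1 + l * x) - l^2) \<le> 0" using True x
          by (simp add: mult_nonpos_nonneg)
        then have "x * (2 * \<psi> * (1 + l * x) - l^2) / (1 + l * x) \<le> 0"
          using pos[of x] x xi by (simp add: divide_nonpos_pos)
        then show "\<exists>y. DERIV h x :> y \<and> y \<le> 0" using dh[of x] x xi by auto
      qed (use neg cont xi in auto)
      then show ?thesis using h0 by simp
    next
      case False
      have "h (-1) \<le> h \<xi>"
      proof (rule DERIV_nonneg_imp_increasing_open[OF xi _ cont])
        fix x assume x: "-1 < x" "x < \<xi>"
        have "l * x \<le> l * \<xi>" using x lpos by simp
        then have "2 * \<psi> * (1 + l * x) \<le> 2 * \<psi> * (1 + l * \<xi>)" using psinn by (simp add: mult_left_mono)
        then have "x * (2 * \<psi> * (1 + l * x) - l^2) \<ge> 0" using False x neg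
          by (intro mult_nonpos_nonpos) auto
        then have "x * (2 * \<psi> * (1 + l * x) - l^2) / (1 + l * x) \<ge> 0"
          using pos[of x] x by (simp add: divide_nonneg_pos)
        then show "\<exists>y. DERIV h x :> y \<and> 0 \<le> y" using dh[of x] x by auto
      qed simp
      then show ?thesis using hm1 by simp
    qed
  qed
  then have "l * \<xi> - psiE l * \<xi>^2 \<le> ln (1 + l * \<xi>)" by (simp add: h_def \<psi>_def)
  then have "exp (l * \<xi> - psiE l * \<xi>^2) \<le> exp (ln (1 + l * \<xi>))" by simp
  also have "\<dots> = 1 + l * \<xi>" using pos[OF xi] by simp
  finally show ?thesis .
qed



lemma synth_label_meas:
  fixes fp :: "real^'d \<Rightarrow> 'y::finite \<Rightarrow> real"
  assumes fp_meas: "\<And>c. (\<lambda>x. fp x c) \<in> borel_measurable borel"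
  shows "synth_label fp \<in> measurable borel (count_space UNIV)"
proof -
  define h :: "'y set \<Rightarrow> 'y" where "h S = (SOME c. c \<in> S)" for S
  define Am where "Am x = {c. \<forall>c'. fp x c' \<le> fp x c}" for x
  have eq: "synth_label fp x = h (Am x)" for x
    unfolding synth_label_def arg_max_on_def arg_max_def is_arg_max_def h_def Am_def
    by (simp add: not_less)
  have pre: "synth_label fp -` {c} = {x. \<exists>S\<in>{S. h S = c}. \<forall>c0\<in>UNIV. (c0 \<in> S \<longleftrightarrow> (\<forall>c'\<in>UNIV. fp x c' \<le> fp x c0))}" for c
  proof (rule set_eqI, rule iffI)
    fix x assume "x \<in> synth_label fp -` {c}"
    then show "x \<in> {x. \<exists>S\<in>{S. h S = c}. \<forall>c0\<in>UNIV. (c0 \<in> S \<longleftrightarrow> (\<forall>c'\<in>UNIV. fp x c' \<le> fp x c0))}"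
      by (auto simp: eq Am_def intro!: bexI[of _ "Am x"])
  next
    fix x assume "x \<in> {x. \<exists>S\<in>{S. h S = c}. \<forall>c0\<in>UNIV. (c0 \<in> S \<longleftrightarrow> (\<forall>c'\<in>UNIV. fp x c' \<le> fp x c0))}"
    then obtain S where S: "h S = c" "\<And>c0. c0 \<in> S \<longleftrightarrow> (\<forall>c'. fp x c' \<le> fp x c0)" by auto
    then have "S = Am x" by (auto simp: Am_def)
    then show "x \<in> synth_label fp -` {c}" using S by (simp add: eq)
  qed
  have "{x. \<exists>S\<in>{S. h S = c}. \<forall>c0\<in>UNIV. (c0 \<in> S \<longleftrightarrow> (\<forall>c'\<in>UNIV. fp x c' \<le> fp x c0))} \<in> sets borel" for c
  proof -
    have [measurable]: "\<And>c. (\<lambda>x. fp x c) \<in> borel_measurable borel" by (rule fp_meas)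
    have "Measurable.pred borel (\<lambda>x. \<exists>S\<in>{S. h S = c}. \<forall>c0\<in>UNIV. (c0 \<in> S \<longleftrightarrow> (\<forall>c'\<in>UNIV. fp x c' \<le> fp x c0)))"
      by measurable
    then show ?thesis by (simp add: pred_def)
  qed
  then show ?thesis
    by (subst measurable_count_space_eq2) (auto simp: pre)
qed

lemma loss_synth_meas:
  fixes fp :: "real^'d \<Rightarrow> 'y::finite \<Rightarrow> real"
  assumes fp_meas: "\<And>c. (\<lambda>x. fp x c) \<in> borel_measurable borel"
    and loss_meas: "\<And>y. (\<lambda>x. loss (f x) y) \<in> borel_measurable borel"
  shows "(\<lambda>x. loss (f x) (synth_label fp x)) \<in> borel_measurable borel"
  by (rule measurable_compose_countable'[where I=UNIV, OF loss_meas synth_label_meas[OF fp_meas]])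
     (auto intro: countable_finite)

lemma loss_pair_meas:
  fixes loss :: "'o \<Rightarrow> 'y::finite \<Rightarrow> real"
  assumes loss_meas: "\<And>y. (\<lambda>x. loss (f x) y) \<in> borel_measurable borel"
  shows "(\<lambda>z. loss (f (fst z)) (snd z)) \<in> borel_measurable (borel \<Otimes>\<^sub>M count_space UNIV)"
  by (rule measurable_compose_countable'[where I=UNIV and g=snd and f="\<lambda>y z. loss (f (fst z)) y"])
     (auto intro: countable_finite measurable_compose[OF measurable_fst loss_meas])


locale pprm =
  fixes M :: "'a measure"
    and P :: "nat \<Rightarrow> ((real^('d::finite)) \<times> 'y::finite) measure"
    and f :: "real^'d \<Rightarrow> 'o" and loss :: "'o \<Rightarrow> 'y \<Rightarrow> real"
    and fp :: "real^'d \<Rightarrow> 'y \<Rightarrow> real"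
    and n N :: "nat \<Rightarrow> nat"
    and Xl Xu :: "nat \<Rightarrow> nat \<Rightarrow> 'a \<Rightarrow> real^'d" and Yl :: "nat \<Rightarrow> nat \<Rightarrow> 'a \<Rightarrow> 'y"
    and \<eta> :: "nat \<Rightarrow> 'a \<Rightarrow> real" and \<eta>max :: real
    and z0 :: real and Q :: "real measure"
    and \<delta>S \<delta>T \<epsilon>tol :: real
    and U0 :: "'a \<Rightarrow> real"
    and R :: "nat \<Rightarrow> real" and Rpp Z Zbar V :: "nat \<Rightarrow> 'a \<Rightarrow> real" and L :: "nat \<Rightarrow> 'a \<Rightarrow> ereal"
  assumes M: "prob_space M"
    and P: "\<And>t. prob_space (P t)" "\<And>t. sets (P t) = sets (borel \<Otimes>\<^sub>M count_space UNIV)"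
    and loss_range: "\<And>out y. 0 \<le> loss out y \<and> loss out y \<le> 1"
    and loss_meas: "\<And>y. (\<lambda>x. loss (f x) y) \<in> borel_measurable borel"
    and fp_meas: "\<And>c. (\<lambda>x. fp x c) \<in> borel_measurable borel"
    and sizes: "\<And>t. t \<ge> 1 \<Longrightarrow> n t \<ge> 1 \<and> N t \<ge> 1"
    and Xl_meas: "\<And>t i. (\<lambda>\<omega>. (Xl t i \<omega>, Yl t i \<omega>)) \<in> measurable M (borel \<Otimes>\<^sub>M count_space UNIV)"
    and Xu_meas: "\<And>t j. Xu t j \<in> measurable M borel"
    and lab_distr: "\<And>t i. i < n t \<Longrightarrow>
          distr M (borel \<Otimes>\<^sub>M count_space UNIV) (\<lambda>\<omega>. (Xl t i \<omega>, Yl t i \<omega>)) = P t"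
    and unl_distr: "\<And>t j. j < N t \<Longrightarrow> distr M borel (Xu t j) = distr (P t) borel fst"
    and indep: "prob_space.indep_sets M (sample_sets M Xl Yl Xu) (sample_index n N)"
    and \<eta>max: "\<eta>max > 0"
    and \<eta>_range: "\<And>t \<omega>. t \<ge> 1 \<Longrightarrow> \<omega> \<in> space M \<Longrightarrow> 0 \<le> \<eta> t \<omega> \<and> \<eta> t \<omega> \<le> \<eta>max"
    and \<eta>_pred: "\<And>t. t \<ge> 1 \<Longrightarrow> \<eta> t \<in> borel_measurable (data_sigma M Xl Yl Xu n N {1..<t})"
    and z0: "0 \<le> z0" "z0 \<le> 1"
    and \<delta>: "0 < \<delta>S" "\<delta>S < 1" "0 < \<delta>T" "\<delta>T < 1" "\<delta>S + \<delta>T < 1"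
    and Q: "prob_space Q" "sets Q = sets borel" "AE l in Q. 0 \<le> l \<and> l < 1"
    and U0_meas: "U0 \<in> borel_measurable (data_sigma M Xl Yl Xu n N {0})"
    and \<epsilon>tol: "\<epsilon>tol > 0"
    and R_def: "\<And>t. R t = (\<integral>z. loss (f (fst z)) (snd z) \<partial>P t)"
    and U0_cover: "prob_space.prob M {\<omega> \<in> space M. R 0 \<le> U0 \<omega>} \<ge> 1 - \<delta>S"
    and H0: "\<And>t. t \<ge> 1 \<Longrightarrow> (1 / real t) * (\<Sum>t'\<in>{1..t}. R t') \<le> R 0 + \<epsilon>tol"
    and Rpp_def: "\<And>t \<omega>. Rpp t \<omega> =
          \<eta> t \<omega> / real (N t) * (\<Sum>j<N t. loss (f (Xu t j \<omega>)) (synth_label fp (Xu t j \<omega>)))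
        + 1 / real (n t) * (\<Sum>i<n t. loss (f (Xl t i \<omega>)) (Yl t i \<omega>))
        - \<eta> t \<omega> / real (n t) * (\<Sum>i<n t. loss (f (Xl t i \<omega>)) (synth_label fp (Xl t i \<omega>)))"
    and Z_def: "\<And>t \<omega>. Z t \<omega> = (Rpp t \<omega> + \<eta>max) / (1 + 2 * \<eta>max)"
    and Zbar_def: "\<And>t \<omega>. Zbar t \<omega> = (if t = 0 then z0 else (1 / real t) * (\<Sum>t'\<in>{1..t}. Z t' \<omega>))"
    and V_def: "\<And>t \<omega>. V t \<omega> = (\<Sum>t'\<in>{1..t}. (Z t' \<omega> - Zbar (t' - 1) \<omega>)\<^sup>2)"
    and L_def: "\<And>t \<omega>. L t \<omega> =
          ereal ((1 / real t) * (\<Sum>t'\<in>{1..t}. Rpp t' \<omega>))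
          - ereal (1 + 2 * \<eta>max) * u_bound Q \<delta>T (V t \<omega>) / ereal (real t)"
begin

sublocale prob_space M by (rule M)


end

context pprm begin

abbreviation F where "F T \<equiv> data_sigma M Xl Yl Xu n N T"

definition gen where "gen T = \<Union> {sample_sets M Xl Yl Xu k | k. k \<in> sample_index n N \<and> sidx_time k \<in> T}"

lemma sample_sets_sub: "sample_sets M Xl Yl Xu k \<subseteq> sets M"
proof (cases k)
  case (Lab t i)
  then show ?thesis using measurable_sets[OF Xl_meas[of t i]] by (auto simp: sample_sets_def)
next
  case (Unl t j)
  then show ?thesis using measurable_sets[OF Xu_meas[of t j]] by (auto simp: sample_sets_def)
qed

lemma gen_sub: "gen T \<subseteq> sets M"
  using sample_sets_sub unfolding gen_def by blast

lemma gen_pow: "gen T \<subseteq> Pow (space M)"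
  using gen_sub sets.sets_into_space by blast

lemma sets_F: "sets (F T) = sigma_sets (space M) (gen T)"
  unfolding data_sigma_def gen_def[symmetric] using gen_pow by (simp add: sets_measure_of)

lemma space_F: "space (F T) = space M"
  unfolding data_sigma_def by (simp add: space_measure_of_conv)

lemma sub_F: "subalgebra M (F T)"
  unfolding subalgebra_def space_F sets_F using gen_sub by (simp add: sets.sigma_sets_subset)

lemma F_mono: "T1 \<subseteq> T2 \<Longrightarrow> subalgebra (F T2) (F T1)"
  unfolding subalgebra_def space_F sets_F
  by (intro conjI refl sigma_sets_mono') (auto simp: gen_def)

lemma meas_F_M: "g \<in> measurable (F T) K \<Longrightarrow> g \<in> measurable M K"
  by (rule measurable_from_subalg[OF sub_F])

lemma meas_F_mono: "T1 \<subseteq> T2 \<Longrightarrow> g \<in> measurable (F T1) K \<Longrightarrow> g \<in> measurable (F T2) K"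
  by (rule measurable_from_subalg[OF F_mono])

lemma meas_lab: assumes "s \<in> T" "i < n s"
  shows "(\<lambda>\<omega>. (Xl s i \<omega>, Yl s i \<omega>)) \<in> measurable (F T) (borel \<Otimes>\<^sub>M count_space UNIV)"
proof (rule measurableI)
  fix x assume "x \<in> space (F T)"
  then show "(Xl s i x, Yl s i x) \<in> space (borel \<Otimes>\<^sub>M count_space UNIV)"
    by (simp add: space_pair_measure)
next
  fix A :: "((real^'d) \<times> 'y) set" assume A: "A \<in> sets (borel \<Otimes>\<^sub>M count_space UNIV)"
  have k: "Lab s i \<in> sample_index n N" "sidx_time (Lab s i) \<in> T"
    using assms by (auto simp: sample_index_def)
  have "(\<lambda>\<omega>. (Xl s i \<omega>, Yl s i \<omega>)) -` A \<inter> space M \<in> sample_sets M Xl Yl Xu (Lab s i)"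
    unfolding sample_sets_def using A by auto
  then have "(\<lambda>\<omega>. (Xl s i \<omega>, Yl s i \<omega>)) -` A \<inter> space M \<in> gen T"
    unfolding gen_def using k by blast
  then show "(\<lambda>\<omega>. (Xl s i \<omega>, Yl s i \<omega>)) -` A \<inter> space (F T) \<in> sets (F T)"
    unfolding space_F sets_F by (rule sigma_sets.Basic)
qed

lemma meas_unl: assumes "s \<in> T" "j < N s"
  shows "Xu s j \<in> measurable (F T) borel"
proof (rule measurableI)
  fix A :: "(real^'d) set" assume A: "A \<in> sets borel"
  have k: "Unl s j \<in> sample_index n N" "sidx_time (Unl s j) \<in> T"
    using assms by (auto simp: sample_index_def)
  have "Xu s j -` A \<inter> space M \<in> sample_sets M Xl Yl Xu (Unl s j)"
    unfolding sample_sets_def using A by auto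
  then have "Xu s j -` A \<inter> space M \<in> gen T"
    unfolding gen_def using k by blast
  then show "Xu s j -` A \<inter> space (F T) \<in> sets (F T)"
    unfolding space_F sets_F by (rule sigma_sets.Basic)
qed simp

lemma meas_Xl: "s \<in> T \<Longrightarrow> i < n s \<Longrightarrow> Xl s i \<in> borel_measurable (F T)"
  using measurable_compose[OF meas_lab measurable_fst] by (simp add: comp_def)

lemma meas_Yl: "s \<in> T \<Longrightarrow> i < n s \<Longrightarrow> Yl s i \<in> measurable (F T) (count_space UNIV)"
  using measurable_compose[OF meas_lab measurable_snd] by (simp add: comp_def)

lemma lsm: "(\<lambda>x. loss (f x) (synth_label fp x)) \<in> borel_measurable borel"
  using loss_synth_meas[of fp loss f] fp_meas loss_meas by blast

lemma lpm: "(\<lambda>z. loss (f (fst z)) (snd z)) \<in> borel_measurable (borel \<Otimes>\<^sub>M count_space UNIV)"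
  using loss_pair_meas[of loss f] loss_meas by blast

definition Aavg where "Aavg s \<omega> = 1 / real (N s) * (\<Sum>j<N s. loss (f (Xu s j \<omega>)) (synth_label fp (Xu s j \<omega>)))"
definition Bavg where "Bavg s \<omega> = 1 / real (n s) * (\<Sum>i<n s. loss (f (Xl s i \<omega>)) (Yl s i \<omega>))"
definition Cavg where "Cavg s \<omega> = 1 / real (n s) * (\<Sum>i<n s. loss (f (Xl s i \<omega>)) (synth_label fp (Xl s i \<omega>)))"

lemma Rpp_eq: "Rpp s \<omega> = \<eta> s \<omega> * Aavg s \<omega> + Bavg s \<omega> - \<eta> s \<omega> * Cavg s \<omega>"
  unfolding Rpp_def Aavg_def Bavg_def Cavg_def by simp

lemma Aavg_meas: "s \<in> T \<Longrightarrow> Aavg s \<in> borel_measurable (F T)"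
  unfolding Aavg_def
  by (intro borel_measurable_times borel_measurable_const borel_measurable_sum
        measurable_compose[OF meas_unl lsm]) auto

lemma Bavg_meas: "s \<in> T \<Longrightarrow> Bavg s \<in> borel_measurable (F T)"
  unfolding Bavg_def
  by (intro borel_measurable_times borel_measurable_const borel_measurable_sum
        measurable_compose[OF meas_lab lpm, simplified]) auto

lemma Cavg_meas: "s \<in> T \<Longrightarrow> Cavg s \<in> borel_measurable (F T)"
  unfolding Cavg_def
  by (intro borel_measurable_times borel_measurable_const borel_measurable_sum
        measurable_compose[OF meas_Xl lsm]) auto

lemma eta_meas: "1 \<le> s \<Longrightarrow> s \<le> t \<Longrightarrow> \<eta> s \<in> borel_measurable (F {1..t})"
  by (rule meas_F_mono[OF _ \<eta>_pred]) auto

lemma Rpp_meas: "1 \<le> s \<Longrightarrow> s \<le> t \<Longrightarrow> Rpp s \<in> borel_measurable (F {1..t})"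
  unfolding Rpp_eq[abs_def]
  by (intro borel_measurable_diff borel_measurable_add borel_measurable_times eta_meas
      Aavg_meas Bavg_meas Cavg_meas) auto

lemma Z_meas: "1 \<le> s \<Longrightarrow> s \<le> t \<Longrightarrow> Z s \<in> borel_measurable (F {1..t})"
  unfolding Z_def[abs_def] by (intro borel_measurable_divide borel_measurable_add Rpp_meas borel_measurable_const)

lemma Zbar_meas: "Zbar s \<in> borel_measurable (F {1..t})" if "s \<le> t"
proof (cases "s = 0")
  case False
  have "(\<lambda>\<omega>. 1 / real s * (\<Sum>t'\<in>{1..s}. Z t' \<omega>)) \<in> borel_measurable (F {1..t})"
    using that by (intro borel_measurable_times borel_measurable_const borel_measurable_sum Z_meas) auto
  moreover have "Zbar s = (\<lambda>\<omega>. 1 / real s * (\<Sum>t'\<in>{1..s}. Z t' \<omega>))"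
    using False by (auto simp: Zbar_def)
  ultimately show ?thesis by simp
next
  case True
  then have "Zbar s = (\<lambda>\<omega>. z0)" by (auto simp: Zbar_def)
  then show ?thesis by simp
qed

lemma V_meas: "V t \<in> borel_measurable (F {1..t})"
  unfolding V_def[abs_def]
  by (intro borel_measurable_sum borel_measurable_power borel_measurable_diff Z_meas Zbar_meas) auto


lemma bint: "(g::'a \<Rightarrow> real) \<in> borel_measurable M \<Longrightarrow> (\<And>\<omega>. \<omega> \<in> space M \<Longrightarrow> \<bar>g \<omega>\<bar> \<le> (B::real)) \<Longrightarrow> integrable M g"
  by (rule integrable_const_bound[where B=B]) (auto intro!: AE_I2)

lemma loss01: "0 \<le> loss o' y" "loss o' y \<le> 1"
  using loss_range by auto

lemma avg01:
  fixes g :: "nat \<Rightarrow> real"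
  assumes "m \<ge> 1" "\<And>j. 0 \<le> g j \<and> g j \<le> 1"
  shows "0 \<le> 1 / real m * (\<Sum>j<m. g j)" "1 / real m * (\<Sum>j<m. g j) \<le> 1"
proof -
  have s0: "0 \<le> (\<Sum>j<m. g j)" using assms by (auto intro: sum_nonneg)
  have s1: "(\<Sum>j<m. g j) \<le> real m" using sum_bounded_above[of "{..<m}" g 1] assms by auto
  show "0 \<le> 1 / real m * (\<Sum>j<m. g j)" using s0 by simp
  show "1 / real m * (\<Sum>j<m. g j) \<le> 1" using s1 assms(1) by (simp add: field_simps)
qed

lemma A01: "1 \<le> s \<Longrightarrow> 0 \<le> Aavg s \<omega> \<and> Aavg s \<omega> \<le> 1"
  unfolding Aavg_def using avg01[of "N s"] sizes[of s] loss_range by auto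

lemma B01: "1 \<le> s \<Longrightarrow> 0 \<le> Bavg s \<omega> \<and> Bavg s \<omega> \<le> 1"
  unfolding Bavg_def using avg01[of "n s"] sizes[of s] loss_range by auto

lemma C01: "1 \<le> s \<Longrightarrow> 0 \<le> Cavg s \<omega> \<and> Cavg s \<omega> \<le> 1"
  unfolding Cavg_def using avg01[of "n s"] sizes[of s] loss_range by auto

lemma Rpp_bnd: assumes "1 \<le> s" "\<omega> \<in> space M"
  shows "- \<eta>max \<le> Rpp s \<omega> \<and> Rpp s \<omega> \<le> 1 + \<eta>max"
proof -
  have e: "0 \<le> \<eta> s \<omega>" "\<eta> s \<omega> \<le> \<eta>max" using \<eta>_range[OF assms] by auto
  have a: "0 \<le> Aavg s \<omega>" "Aavg s \<omega> \<le> 1" using A01[OF assms(1)] by auto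
  have b: "0 \<le> Bavg s \<omega>" "Bavg s \<omega> \<le> 1" using B01[OF assms(1)] by auto
  have c: "0 \<le> Cavg s \<omega>" "Cavg s \<omega> \<le> 1" using C01[OF assms(1)] by auto
  have "\<eta> s \<omega> * Aavg s \<omega> - \<eta> s \<omega> * Cavg s \<omega> = \<eta> s \<omega> * (Aavg s \<omega> - Cavg s \<omega>)" by (simp add: algebra_simps)
  moreover have "\<eta> s \<omega> * (Aavg s \<omega> - Cavg s \<omega>) \<le> \<eta>max"
  proof -
    have "\<eta> s \<omega> * (Aavg s \<omega> - Cavg s \<omega>) \<le> \<eta> s \<omega> * 1" using e a c by (intro mult_left_mono) auto
    then show ?thesis using e by simp
  qed
  moreover have "\<eta> s \<omega> * (Aavg s \<omega> - Cavg s \<omega>) \<ge> - \<eta>max"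
  proof -
    have "\<eta> s \<omega> * (Aavg s \<omega> - Cavg s \<omega>) \<ge> \<eta> s \<omega> * (-1)" using e a c by (intro mult_left_mono) auto
    then show ?thesis using e by simp
  qed
  ultimately show ?thesis unfolding Rpp_eq using b by linarith
qed

lemma kpos: "0 < 1 + 2 * \<eta>max" using \<eta>max by simp

lemma Z01: assumes "1 \<le> s" "\<omega> \<in> space M" shows "0 \<le> Z s \<omega> \<and> Z s \<omega> \<le> 1"
  using Rpp_bnd[OF assms] kpos by (auto simp: Z_def field_simps)

lemma Zbar01: assumes "\<omega> \<in> space M" shows "0 \<le> Zbar s \<omega> \<and> Zbar s \<omega> \<le> 1"
proof (cases "s = 0")
  case True then show ?thesis using z0 by (simp add: Zbar_def)
next
  case False
  have s0: "0 \<le> (\<Sum>t'\<in>{1..s}. Z t' \<omega>)" using Z01 assms by (auto intro: sum_nonneg)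
  have s1: "(\<Sum>t'\<in>{1..s}. Z t' \<omega>) \<le> real s" using sum_bounded_above[of "{1..s}" "\<lambda>t'. Z t' \<omega>" 1] Z01 assms by auto
  show ?thesis using False s0 s1 by (simp add: Zbar_def field_simps)
qed

lemma V_nonneg: "0 \<le> V t \<omega>" unfolding V_def by (auto intro: sum_nonneg)

lemma Ps: "prob_space (P s)" by (rule P(1))

lemma lpm_P: "(\<lambda>z. loss (f (fst z)) (snd z)) \<in> borel_measurable (P s)"
  by (subst measurable_cong_sets[OF P(2)[of s] refl]) (rule lpm)

lemma lsm_P: "(\<lambda>z. loss (f (fst z)) (synth_label fp (fst z))) \<in> borel_measurable (P s)"
  using measurable_compose[OF measurable_fst[of borel "count_space UNIV"] lsm]
  by (subst measurable_cong_sets[OF P(2)[of s] refl]) (simp add: comp_def)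

lemma R01: "0 \<le> R s \<and> R s \<le> 1"
proof -
  interpret Ps: prob_space "P s" by (rule Ps)
  have int: "integrable (P s) (\<lambda>z. loss (f (fst z)) (snd z))"
    by (rule Ps.integrable_const_bound[where B=1]) (auto intro!: AE_I2 lpm_P simp: loss_range abs_le_iff)
  have "0 \<le> R s" unfolding R_def by (rule integral_nonneg_AE) (auto intro!: AE_I2 simp: loss_range)
  moreover have "R s \<le> (\<integral>z. 1 \<partial>P s)" unfolding R_def
    by (rule integral_mono[OF int]) (auto simp: loss_range)
  ultimately show ?thesis using Ps.prob_space by simp
qed

definition mu where "mu s = (R s + \<eta>max) / (1 + 2 * \<eta>max)"

lemma mu01: "0 \<le> mu s \<and> mu s \<le> 1"
  using R01[of s] kpos \<eta>max by (auto simp: mu_def field_simps)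

definition aa where "aa s = (\<integral>z. loss (f (fst z)) (synth_label fp (fst z)) \<partial>P s)"

lemma EA: assumes "1 \<le> s" shows "(\<integral>\<omega>. Aavg s \<omega> \<partial>M) = aa s"
proof -
  let ?g = "\<lambda>x. loss (f x) (synth_label fp x)"
  have each: "(\<integral>\<omega>. ?g (Xu s j \<omega>) \<partial>M) = aa s" if j: "j < N s" for j
  proof -
    have "(\<integral>\<omega>. ?g (Xu s j \<omega>) \<partial>M) = (\<integral>x. ?g x \<partial>distr M borel (Xu s j))"
      by (rule integral_distr[symmetric, OF Xu_meas lsm])
    also have "\<dots> = (\<integral>x. ?g x \<partial>distr (P s) borel fst)" using unl_distr[OF j] by simp
    also have "\<dots> = aa s" unfolding aa_def
      by (rule integral_distr) (subst measurable_cong_sets[OF P(2)[of s] refl], simp, rule lsm)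
    finally show ?thesis .
  qed
  have int: "integrable M (\<lambda>\<omega>. ?g (Xu s j \<omega>))" for j
    by (rule bint[where B=1]) (auto intro: measurable_compose[OF Xu_meas lsm] simp: abs_le_iff loss_range)
  have "(\<integral>\<omega>. Aavg s \<omega> \<partial>M) = 1 / real (N s) * (\<Sum>j<N s. (\<integral>\<omega>. ?g (Xu s j \<omega>) \<partial>M))"
    unfolding Aavg_def by (simp add: Bochner_Integration.integral_sum int)
  also have "\<dots> = 1 / real (N s) * (real (N s) * aa s)" using each by simp
  also have "\<dots> = aa s" using sizes[OF assms] by simp
  finally show ?thesis .
qed

lemma EC: assumes "1 \<le> s" shows "(\<integral>\<omega>. Cavg s \<omega> \<partial>M) = aa s"
proof -
  let ?g = "\<lambda>x. loss (f x) (synth_label fp x)"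
  have gm: "(\<lambda>z. ?g (fst z)) \<in> borel_measurable (borel \<Otimes>\<^sub>M count_space UNIV)"
    using measurable_compose[OF measurable_fst[of borel "count_space UNIV"] lsm] by (simp add: comp_def)
  have each: "(\<integral>\<omega>. ?g (Xl s i \<omega>) \<partial>M) = aa s" if i: "i < n s" for i
  proof -
    have "(\<integral>\<omega>. ?g (Xl s i \<omega>) \<partial>M) = (\<integral>z. ?g (fst z) \<partial>distr M (borel \<Otimes>\<^sub>M count_space UNIV) (\<lambda>\<omega>. (Xl s i \<omega>, Yl s i \<omega>)))"
      using integral_distr[OF Xl_meas gm] by simp
    also have "\<dots> = aa s" using lab_distr[OF i] by (simp add: aa_def)
    finally show ?thesis .
  qed
  have xm: "Xl s i \<in> borel_measurable M" for i
    using measurable_compose[OF Xl_meas measurable_fst] by (simp add: comp_def)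
  have int: "integrable M (\<lambda>\<omega>. ?g (Xl s i \<omega>))" for i
    by (rule bint[where B=1]) (auto intro: measurable_compose[OF xm lsm] simp: abs_le_iff loss_range)
  have "(\<integral>\<omega>. Cavg s \<omega> \<partial>M) = 1 / real (n s) * (\<Sum>i<n s. (\<integral>\<omega>. ?g (Xl s i \<omega>) \<partial>M))"
    unfolding Cavg_def by (simp add: Bochner_Integration.integral_sum int)
  also have "\<dots> = 1 / real (n s) * (real (n s) * aa s)" using each by simp
  also have "\<dots> = aa s" using sizes[OF assms] by simp
  finally show ?thesis .
qed

lemma EB: assumes "1 \<le> s" shows "(\<integral>\<omega>. Bavg s \<omega> \<partial>M) = R s"
proof -
  let ?g = "\<lambda>z. loss (f (fst z)) (snd z)"
  have each: "(\<integral>\<omega>. loss (f (Xl s i \<omega>)) (Yl s i \<omega>) \<partial>M) = R s" if i: "i < n s" for i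
  proof -
    have "(\<integral>\<omega>. loss (f (Xl s i \<omega>)) (Yl s i \<omega>) \<partial>M) = (\<integral>z. ?g z \<partial>distr M (borel \<Otimes>\<^sub>M count_space UNIV) (\<lambda>\<omega>. (Xl s i \<omega>, Yl s i \<omega>)))"
      using integral_distr[OF Xl_meas lpm] by simp
    also have "\<dots> = R s" using lab_distr[OF i] by (simp add: R_def)
    finally show ?thesis .
  qed
  have int: "integrable M (\<lambda>\<omega>. loss (f (Xl s i \<omega>)) (Yl s i \<omega>))" for i
    by (rule bint[where B=1]) (auto intro: measurable_compose[OF Xl_meas lpm, simplified] simp: abs_le_iff loss_range)
  have "(\<integral>\<omega>. Bavg s \<omega> \<partial>M) = 1 / real (n s) * (\<Sum>i<n s. (\<integral>\<omega>. loss (f (Xl s i \<omega>)) (Yl s i \<omega>) \<partial>M))"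
    unfolding Bavg_def by (simp add: Bochner_Integration.integral_sum int)
  also have "\<dots> = 1 / real (n s) * (real (n s) * R s)" using each by simp
  also have "\<dots> = R s" using sizes[OF assms] by simp
  finally show ?thesis .
qed


lemma bprod: "\<bar>x\<bar> \<le> a \<Longrightarrow> \<bar>y\<bar> \<le> b \<Longrightarrow> \<bar>x * y\<bar> \<le> a * (b::real)"
  unfolding abs_mult by (rule mult_mono) auto

lemma bprod1: "\<bar>x\<bar> \<le> a \<Longrightarrow> \<bar>y\<bar> \<le> 1 \<Longrightarrow> \<bar>x * y\<bar> \<le> (a::real)"
  using bprod[of x a y 1] by simp

lemma Int_stable_ss: "Int_stable (sample_sets M Xl Yl Xu k)"
proof (cases k)
  case (Lab t i)
  show ?thesis unfolding Int_stable_def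
  proof (intro ballI)
    fix a b assume "a \<in> sample_sets M Xl Yl Xu k" "b \<in> sample_sets M Xl Yl Xu k"
    then obtain A B where "a = (\<lambda>\<omega>. (Xl t i \<omega>, Yl t i \<omega>)) -` A \<inter> space M" "A \<in> sets (borel \<Otimes>\<^sub>M count_space UNIV)"
      "b = (\<lambda>\<omega>. (Xl t i \<omega>, Yl t i \<omega>)) -` B \<inter> space M" "B \<in> sets (borel \<Otimes>\<^sub>M count_space UNIV)"
      unfolding sample_sets_def Lab by auto
    then show "a \<inter> b \<in> sample_sets M Xl Yl Xu k"
      unfolding sample_sets_def Lab by (auto intro!: exI[of _ "A \<inter> B"])
  qed
next
  case (Unl t j)
  show ?thesis unfolding Int_stable_def
  proof (intro ballI)
    fix a b assume "a \<in> sample_sets M Xl Yl Xu k" "b \<in> sample_sets M Xl Yl Xu k"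
    then obtain A B where "a = Xu t j -` A \<inter> space M" "A \<in> sets borel"
      "b = Xu t j -` B \<inter> space M" "B \<in> sets borel"
      unfolding sample_sets_def Unl by auto
    then show "a \<inter> b \<in> sample_sets M Xl Yl Xu k"
      unfolding sample_sets_def Unl by (auto intro!: exI[of _ "A \<inter> B"])
  qed
qed

lemma indepF: "indep_set (sets (F {1..t})) (sets (F {Suc t}))"
proof -
  define I where "I b = (if b then {k \<in> sample_index n N. sidx_time k \<in> {1..t}} else {k \<in> sample_index n N. sidx_time k \<in> {Suc t}})" for b
  have "indep_sets (sample_sets M Xl Yl Xu) (\<Union>j\<in>UNIV. I j)"
    by (rule indep_sets_mono_index[OF _ indep]) (auto simp: I_def)
  then have "indep_sets (\<lambda>j. sigma_sets (space M) (\<Union>i\<in>I j. sample_sets M Xl Yl Xu i)) UNIV"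
    by (rule indep_sets_collect_sigma) (auto simp: Int_stable_ss disjoint_family_on_def I_def)
  moreover have "(\<lambda>j. sigma_sets (space M) (\<Union>i\<in>I j. sample_sets M Xl Yl Xu i)) = case_bool (sets (F {1..t})) (sets (F {Suc t}))"
  proof (rule ext)
    fix j :: bool
    have "(\<Union>i\<in>I j. sample_sets M Xl Yl Xu i) = gen (if j then {1..t} else {Suc t})"
      unfolding gen_def I_def by auto
    then show "sigma_sets (space M) (\<Union>i\<in>I j. sample_sets M Xl Yl Xu i) = case_bool (sets (F {1..t})) (sets (F {Suc t})) j"
      by (cases j) (simp_all add: sets_F)
  qed
  ultimately show ?thesis unfolding indep_set_def by simp
qed

lemma indep_int:
  fixes X Y :: "'a \<Rightarrow> real"
  assumes ind: "indep_set (sets MA) (sets MB)" and sa: "subalgebra M MA" and sb: "subalgebra M MB"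
    and X: "X \<in> borel_measurable MA" and Y: "Y \<in> borel_measurable MB"
    and iX: "integrable M X" and iY: "integrable M Y"
  shows "(\<integral>\<omega>. X \<omega> * Y \<omega> \<partial>M) = (\<integral>\<omega>. X \<omega> \<partial>M) * (\<integral>\<omega>. Y \<omega> \<partial>M)"
proof -
  have sX: "sigma_sets (space M) {X -` A \<inter> space M | A. A \<in> sets borel} \<subseteq> sets MA"
  proof -
    have "{X -` A \<inter> space M | A. A \<in> sets borel} \<subseteq> sets MA"
      using measurable_sets[OF X] sa by (auto simp: subalgebra_def)
    then show ?thesis using sets.sigma_sets_subset[of _ MA] sa by (auto simp: subalgebra_def)
  qed
  have sY: "sigma_sets (space M) {Y -` A \<inter> space M | A. A \<in> sets borel} \<subseteq> sets MB"
  proof -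
    have "{Y -` A \<inter> space M | A. A \<in> sets borel} \<subseteq> sets MB"
      using measurable_sets[OF Y] sb by (auto simp: subalgebra_def)
    then show ?thesis using sets.sigma_sets_subset[of _ MB] sb by (auto simp: subalgebra_def)
  qed
  have "indep_var borel X borel Y"
    unfolding indep_var_eq
  proof
    show "random_variable borel X \<and> random_variable borel Y"
      using measurable_from_subalg[OF sa X] measurable_from_subalg[OF sb Y] by simp
    show "indep_set (sigma_sets (space M) {X -` A \<inter> space M | A. A \<in> sets borel})
                    (sigma_sets (space M) {Y -` A \<inter> space M | A. A \<in> sets borel})"
      using ind unfolding indep_set_def
      by (rule indep_sets_mono_sets) (use sX sY in \<open>auto split: bool.split\<close>)
  qed
  then show ?thesis by (rule indep_var_lebesgue_integral[OF _ iX iY])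
qed

lemma key:
  fixes W :: "'a \<Rightarrow> real"
  assumes W: "W \<in> borel_measurable (F {1..t})" and Wb: "\<And>\<omega>. \<omega> \<in> space M \<Longrightarrow> \<bar>W \<omega>\<bar> \<le> B"
  shows "(\<integral>\<omega>. W \<omega> * Z (Suc t) \<omega> \<partial>M) = mu (Suc t) * (\<integral>\<omega>. W \<omega> \<partial>M)"
proof -
  define s where "s = Suc t"
  have s1: "1 \<le> s" by (simp add: s_def)
  have em: "\<eta> s \<in> borel_measurable (F {1..t})"
    using \<eta>_pred[OF s1] by (simp add: s_def atLeastLessThanSuc_atLeastAtMost)
  define X1 where "X1 \<omega> = W \<omega> * \<eta> s \<omega>" for \<omega>
  have X1m: "X1 \<in> borel_measurable (F {1..t})" unfolding X1_def using W em by simp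
  have eb: "\<bar>\<eta> s \<omega>\<bar> \<le> \<eta>max" if "\<omega> \<in> space M" for \<omega> using \<eta>_range[OF s1 that] by auto
  have X1b: "\<bar>X1 \<omega>\<bar> \<le> B * \<eta>max" if "\<omega> \<in> space M" for \<omega>
    unfolding X1_def abs_mult using Wb[OF that] eb[OF that] by (intro mult_mono) auto
  have Am: "Aavg s \<in> borel_measurable (F {Suc t})" using Aavg_meas[of s "{Suc t}"] by (simp add: s_def)
  have Bm: "Bavg s \<in> borel_measurable (F {Suc t})" using Bavg_meas[of s "{Suc t}"] by (simp add: s_def)
  have Cm: "Cavg s \<in> borel_measurable (F {Suc t})" using Cavg_meas[of s "{Suc t}"] by (simp add: s_def)
  have Ab: "\<bar>Aavg s \<omega>\<bar> \<le> 1" for \<omega> using A01[OF s1] by (auto simp: abs_le_iff)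
  have Bb: "\<bar>Bavg s \<omega>\<bar> \<le> 1" for \<omega> using B01[OF s1] by (auto simp: abs_le_iff)
  have Cb: "\<bar>Cavg s \<omega>\<bar> \<le> 1" for \<omega> using C01[OF s1] by (auto simp: abs_le_iff)
  have iW: "integrable M W" by (rule bint[OF meas_F_M[OF W] Wb])
  have iX1: "integrable M X1" by (rule bint[OF meas_F_M[OF X1m] X1b])
  have iA: "integrable M (Aavg s)" by (rule bint[OF meas_F_M[OF Am] Ab])
  have iB: "integrable M (Bavg s)" by (rule bint[OF meas_F_M[OF Bm] Bb])
  have iC: "integrable M (Cavg s)" by (rule bint[OF meas_F_M[OF Cm] Cb])
  have pA: "(\<integral>\<omega>. X1 \<omega> * Aavg s \<omega> \<partial>M) = (\<integral>\<omega>. X1 \<omega> \<partial>M) * aa s"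
    using indep_int[OF indepF sub_F sub_F X1m Am iX1 iA] EA[OF s1] by simp
  have pB: "(\<integral>\<omega>. W \<omega> * Bavg s \<omega> \<partial>M) = (\<integral>\<omega>. W \<omega> \<partial>M) * R s"
    using indep_int[OF indepF sub_F sub_F W Bm iW iB] EB[OF s1] by simp
  have pC: "(\<integral>\<omega>. X1 \<omega> * Cavg s \<omega> \<partial>M) = (\<integral>\<omega>. X1 \<omega> \<partial>M) * aa s"
    using indep_int[OF indepF sub_F sub_F X1m Cm iX1 iC] EC[OF s1] by simp
  have iXA: "integrable M (\<lambda>\<omega>. X1 \<omega> * Aavg s \<omega>)"
    by (rule bint[where B="B * \<eta>max"]) (use meas_F_M[OF X1m] meas_F_M[OF Am] X1b Ab bprod1 in auto)
  have iXC: "integrable M (\<lambda>\<omega>. X1 \<omega> * Cavg s \<omega>)"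
    by (rule bint[where B="B * \<eta>max"]) (use meas_F_M[OF X1m] meas_F_M[OF Cm] X1b Cb bprod1 in auto)
  have iWB: "integrable M (\<lambda>\<omega>. W \<omega> * Bavg s \<omega>)"
    by (rule bint[where B="B"]) (use meas_F_M[OF W] meas_F_M[OF Bm] Wb Bb bprod1 in auto)
  have "(\<integral>\<omega>. W \<omega> * Z s \<omega> \<partial>M) = (\<integral>\<omega>. (X1 \<omega> * Aavg s \<omega> + W \<omega> * Bavg s \<omega> - X1 \<omega> * Cavg s \<omega> + \<eta>max * W \<omega>) / (1 + 2 * \<eta>max) \<partial>M)"
    using kpos by (intro Bochner_Integration.integral_cong) (auto simp: Z_def Rpp_eq X1_def field_simps)
  also have "\<dots> = ((\<integral>\<omega>. X1 \<omega> * Aavg s \<omega> \<partial>M) + (\<integral>\<omega>. W \<omega> * Bavg s \<omega> \<partial>M) - (\<integral>\<omega>. X1 \<omega> * Cavg s \<omega> \<partial>M) + \<eta>max * (\<integral>\<omega>. W \<omega> \<partial>M)) / (1 + 2 * \<eta>max)"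
    using iXA iWB iXC iW by simp
  also have "\<dots> = mu s * (\<integral>\<omega>. W \<omega> \<partial>M)"
    unfolding pA pB pC mu_def using kpos by (simp add: field_simps)
  finally show ?thesis by (simp add: s_def)
qed


end

context pprm begin

definition S where "S t \<omega> = (\<Sum>s\<in>{1..t}. (Z s \<omega> - mu s))"
definition Fl where "Fl l t \<omega> = exp (l * S t \<omega> - psiE l * V t \<omega>)"

lemma S_Suc: "S (Suc t) \<omega> = S t \<omega> + (Z (Suc t) \<omega> - mu (Suc t))"
  unfolding S_def by simp

lemma V_Suc: "V (Suc t) \<omega> = V t \<omega> + (Z (Suc t) \<omega> - Zbar t \<omega>)^2"
  unfolding V_def by simp

lemma S_meas: "S t \<in> borel_measurable (F {1..t})"
  unfolding S_def[abs_def]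
  by (intro borel_measurable_sum borel_measurable_diff borel_measurable_const Z_meas) auto

lemma S_bnd: assumes "\<omega> \<in> space M" shows "\<bar>S t \<omega>\<bar> \<le> real t"
proof -
  have "\<bar>S t \<omega>\<bar> \<le> (\<Sum>s\<in>{1..t}. \<bar>Z s \<omega> - mu s\<bar>)" unfolding S_def by (rule sum_abs)
  also have "\<dots> \<le> (\<Sum>s\<in>{1..t}. 1)"
  proof (intro sum_mono)
    fix s assume "s \<in> {1..t}"
    then show "\<bar>Z s \<omega> - mu s\<bar> \<le> 1" using mu01[of s] Z01[of s \<omega>] assms by (auto simp: abs_le_iff)
  qed
  finally show ?thesis by simp
qed

lemma Fl_meas: "Fl l t \<in> borel_measurable (F {1..t})"
  unfolding Fl_def[abs_def] using S_meas V_meas by measurable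

lemma Fl_pos: "0 < Fl l t \<omega>" unfolding Fl_def by simp

lemma Fl_bnd: assumes "0 \<le> l" "l < 1" "\<omega> \<in> space M" shows "Fl l t \<omega> \<le> exp (real t)"
proof -
  have "l * S t \<omega> \<le> l * \<bar>S t \<omega>\<bar>" using assms by (intro mult_left_mono) auto
  also have "\<dots> \<le> 1 * real t"
    using S_bnd[OF assms(3), of t] assms by (intro mult_mono) auto
  finally have "l * S t \<omega> \<le> 1 * real t" .
  moreover have "0 \<le> psiE l * V t \<omega>" using psiE_nonneg[OF assms(1,2)] V_nonneg by simp
  ultimately show ?thesis unfolding Fl_def by simp
qed

lemma exp_one_minus: "exp x * (1 - x) \<le> (1::real)"
proof (cases "x \<le> 1")
  case True
  have "1 - x \<le> exp (- x)" using exp_ge_add_one_self[of "-x"] by simp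
  then have "exp x * (1 - x) \<le> exp x * exp (- x)" by (intro mult_left_mono) auto
  then show ?thesis by (simp add: exp_minus)
next
  case False
  then have "exp x * (1 - x) \<le> 0" by (intro mult_nonneg_nonpos) auto
  then show ?thesis by simp
qed

lemma step1:
  assumes l: "0 \<le> l" "l < 1" and B: "B \<in> sets (F {1..t})"
  shows "(\<integral>\<^sup>+\<omega>. ennreal (Fl l (Suc t) \<omega> * indicator B \<omega>) \<partial>M) \<le> (\<integral>\<^sup>+\<omega>. ennreal (Fl l t \<omega> * indicator B \<omega>) \<partial>M)"
proof -
  define s where "s = Suc t"
  define G where "G \<omega> = Fl l t \<omega> * indicator B \<omega>" for \<omega>
  define d where "d \<omega> = Zbar t \<omega> - mu s" for \<omega>
  define \<xi> where "\<xi> \<omega> = Z s \<omega> - Zbar t \<omega>" for \<omega>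
  define W where "W \<omega> = G \<omega> * exp (l * d \<omega>)" for \<omega>
  have Gm: "G \<in> borel_measurable (F {1..t})" unfolding G_def using Fl_meas B by measurable
  have dm: "d \<in> borel_measurable (F {1..t})" unfolding d_def using Zbar_meas[of t t] by measurable
  have Wm: "W \<in> borel_measurable (F {1..t})" unfolding W_def using Gm dm by measurable
  have Zsm: "Z s \<in> borel_measurable M" using meas_F_M[OF Z_meas[of s s]] by (simp add: s_def)
  have Zbm: "Zbar t \<in> borel_measurable M" using meas_F_M[OF Zbar_meas[of t t]] by simp
  have G0: "0 \<le> G \<omega>" for \<omega> unfolding G_def using Fl_pos[of l t \<omega>] by (simp add: less_imp_le)
  have Gb: "G \<omega> \<le> exp (real t)" if "\<omega> \<in> space M" for \<omega>
    unfolding G_def using Fl_bnd[OF l that, of t] Fl_pos[of l t \<omega>] by (auto simp: indicator_def)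
  have db: "\<bar>d \<omega>\<bar> \<le> 1" if "\<omega> \<in> space M" for \<omega>
    using mu01[of s] Zbar01[OF that, of t] by (auto simp: d_def abs_le_iff)
  have xib: "-1 \<le> \<xi> \<omega> \<and> \<xi> \<omega> \<le> 1" if "\<omega> \<in> space M" for \<omega>
    using Z01[of s \<omega>] Zbar01[OF that, of t] that by (auto simp: \<xi>_def s_def)
  have eb: "exp (l * d \<omega>) \<le> exp 1" if "\<omega> \<in> space M" for \<omega>
  proof -
    have "l * d \<omega> \<le> l * \<bar>d \<omega>\<bar>" using l by (intro mult_left_mono) auto
    also have "\<dots> \<le> 1 * 1" using db[OF that] l by (intro mult_mono) auto
    finally have "l * d \<omega> \<le> 1 * 1" .
    then show ?thesis by simp
  qed
  have W0: "0 \<le> W \<omega>" for \<omega> unfolding W_def using G0 by simp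
  have Wb: "\<bar>W \<omega>\<bar> \<le> exp (real t) * exp 1" if "\<omega> \<in> space M" for \<omega>
    unfolding W_def abs_mult using Gb[OF that] eb[OF that] G0 by (intro mult_mono) auto
  have pw: "Fl l s \<omega> * indicator B \<omega> \<le> W \<omega> * (1 + l * \<xi> \<omega>)" if "\<omega> \<in> space M" for \<omega>
  proof -
    have "Fl l s \<omega> = exp ((l * S t \<omega> - psiE l * V t \<omega>) + l * d \<omega> + (l * \<xi> \<omega> - psiE l * (\<xi> \<omega>)^2))"
      unfolding Fl_def s_def S_Suc V_Suc d_def \<xi>_def
      by (simp add: s_def algebra_simps)
    also have "\<dots> = Fl l t \<omega> * exp (l * d \<omega>) * exp (l * \<xi> \<omega> - psiE l * (\<xi> \<omega>)^2)"
      unfolding exp_add Fl_def by simp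
    finally have "Fl l s \<omega> = Fl l t \<omega> * exp (l * d \<omega>) * exp (l * \<xi> \<omega> - psiE l * (\<xi> \<omega>)^2)" .
    also have "\<dots> \<le> Fl l t \<omega> * exp (l * d \<omega>) * (1 + l * \<xi> \<omega>)"
      using fan_ineq[OF l, of "\<xi> \<omega>"] xib[OF that] Fl_pos[of l t \<omega>] by (intro mult_left_mono) auto
    finally show ?thesis unfolding W_def G_def by (auto simp: indicator_def)
  qed
  have iW: "integrable M W" by (rule bint[OF meas_F_M[OF Wm] Wb])
  have iG: "integrable M G" by (rule bint[where B="exp (real t)"]) (use meas_F_M[OF Gm] Gb G0 in auto)
  have zb2: "\<bar>1 - l * Zbar t \<omega>\<bar> \<le> 2" if "\<omega> \<in> space M" for \<omega>
  proof -
    have "0 \<le> l * Zbar t \<omega>" "l * Zbar t \<omega> \<le> 1"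
      using Zbar01[OF that, of t] l by (auto intro: mult_le_one)
    then show ?thesis by auto
  qed
  have xi2: "0 \<le> 1 + l * \<xi> \<omega> \<and> 1 + l * \<xi> \<omega> \<le> 2" if "\<omega> \<in> space M" for \<omega>
  proof -
    have "l * \<xi> \<omega> \<ge> l * (-1)" using xib[OF that] l by (intro mult_left_mono) auto
    moreover have "l * \<xi> \<omega> \<le> l * 1" using xib[OF that] l by (intro mult_left_mono) auto
    ultimately show ?thesis using l by auto
  qed
  have d2: "\<bar>1 - l * d \<omega>\<bar> \<le> 2" if "\<omega> \<in> space M" for \<omega>
  proof -
    have "\<bar>l * d \<omega>\<bar> \<le> 1 * 1" unfolding abs_mult using db[OF that] l by (intro mult_mono) auto
    then show ?thesis by auto
  qed
  have Zs1: "\<bar>Z s \<omega>\<bar> \<le> 1" if "\<omega> \<in> space M" for \<omega> using Z01[of s \<omega>] that by (auto simp: s_def)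
  have xim: "\<xi> \<in> borel_measurable M" unfolding \<xi>_def using Zsm Zbm by measurable
  have dmM: "d \<in> borel_measurable M" using meas_F_M[OF dm] .
  have WmM: "W \<in> borel_measurable M" using meas_F_M[OF Wm] .
  have iWZb: "integrable M (\<lambda>\<omega>. W \<omega> * (1 - l * Zbar t \<omega>))"
    by (rule bint[where B="exp (real t) * exp 1 * 2"]) (use WmM Zbm bprod[OF Wb zb2] in auto)
  have iWZ: "integrable M (\<lambda>\<omega>. W \<omega> * Z s \<omega>)"
    by (rule bint[where B="exp (real t) * exp 1"]) (use WmM Zsm bprod1[OF Wb Zs1] in auto)
  have iWxi: "integrable M (\<lambda>\<omega>. W \<omega> * (1 + l * \<xi> \<omega>))"
    by (rule bint[where B="exp (real t) * exp 1 * 2"]) (use WmM xim bprod[OF Wb, of _ "1 + l * \<xi> _" 2] xi2 in auto)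
  have iWd: "integrable M (\<lambda>\<omega>. W \<omega> * (1 - l * d \<omega>))"
    by (rule bint[where B="exp (real t) * exp 1 * 2"]) (use WmM dmM bprod[OF Wb d2] in auto)
  have kk: "(\<integral>\<omega>. W \<omega> * Z s \<omega> \<partial>M) = mu s * (\<integral>\<omega>. W \<omega> \<partial>M)"
    using key[OF Wm Wb] by (simp add: s_def)
  have "(\<integral>\<omega>. W \<omega> * (1 + l * \<xi> \<omega>) \<partial>M) = (\<integral>\<omega>. W \<omega> * (1 - l * Zbar t \<omega>) + l * (W \<omega> * Z s \<omega>) \<partial>M)"
    by (rule Bochner_Integration.integral_cong) (auto simp: \<xi>_def algebra_simps)
  also have "\<dots> = (\<integral>\<omega>. W \<omega> * (1 - l * Zbar t \<omega>) \<partial>M) + l * (mu s * (\<integral>\<omega>. W \<omega> \<partial>M))"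
    using iWZb iWZ kk by simp
  also have "\<dots> = (\<integral>\<omega>. W \<omega> * (1 - l * Zbar t \<omega>) + (l * mu s) * W \<omega> \<partial>M)"
    using iWZb iW by simp
  also have "\<dots> = (\<integral>\<omega>. W \<omega> * (1 - l * d \<omega>) \<partial>M)"
    by (rule Bochner_Integration.integral_cong) (auto simp: d_def algebra_simps)
  also have "\<dots> \<le> (\<integral>\<omega>. G \<omega> \<partial>M)"
  proof (rule integral_mono[OF iWd iG])
    fix \<omega> assume "\<omega> \<in> space M"
    have "W \<omega> * (1 - l * d \<omega>) = G \<omega> * (exp (l * d \<omega>) * (1 - l * d \<omega>))" by (simp add: W_def)
    also have "\<dots> \<le> G \<omega> * 1" using G0 exp_one_minus by (intro mult_left_mono) auto
    finally show "W \<omega> * (1 - l * d \<omega>) \<le> G \<omega>" by simp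
  qed
  finally have ineq: "(\<integral>\<omega>. W \<omega> * (1 + l * \<xi> \<omega>) \<partial>M) \<le> (\<integral>\<omega>. G \<omega> \<partial>M)" .
  have "(\<integral>\<^sup>+\<omega>. ennreal (Fl l (Suc t) \<omega> * indicator B \<omega>) \<partial>M) \<le> (\<integral>\<^sup>+\<omega>. ennreal (W \<omega> * (1 + l * \<xi> \<omega>)) \<partial>M)"
    using pw by (intro nn_integral_mono ennreal_leI) (auto simp: s_def)
  also have "\<dots> = ennreal (\<integral>\<omega>. W \<omega> * (1 + l * \<xi> \<omega>) \<partial>M)"
    by (rule nn_integral_eq_integral[OF iWxi]) (use W0 xi2 in \<open>auto intro!: AE_I2\<close>)
  also have "\<dots> \<le> ennreal (\<integral>\<omega>. G \<omega> \<partial>M)" using ineq by (rule ennreal_leI)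
  also have "\<dots> = (\<integral>\<^sup>+\<omega>. ennreal (G \<omega>) \<partial>M)"
    by (rule nn_integral_eq_integral[OF iG, symmetric]) (use G0 in auto)
  finally show ?thesis unfolding G_def .
qed


end

context pprm begin

definition Mx where "Mx t \<omega> = (\<integral>\<^sup>+ l. ennreal (Fl l t \<omega>) \<partial>Q)"

lemma psiE_meas[measurable]: "psiE \<in> borel_measurable borel"
  unfolding psiE_def[abs_def] by measurable

lemma Fl_pair_meas: "(\<lambda>(\<omega>, l). ennreal (Fl l t \<omega>)) \<in> borel_measurable (F {1..t} \<Otimes>\<^sub>M borel)"
proof -
  have [measurable]: "S t \<in> borel_measurable (F {1..t})" "V t \<in> borel_measurable (F {1..t})"
    using S_meas V_meas by auto
  show ?thesis unfolding Fl_def by measurable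
qed

lemma Fl_pair_meas_M: "(\<lambda>(\<omega>, l). ennreal (Fl l t \<omega>)) \<in> borel_measurable (M \<Otimes>\<^sub>M borel)"
proof -
  have [measurable]: "S t \<in> borel_measurable M" "V t \<in> borel_measurable M"
    using meas_F_M[OF S_meas] meas_F_M[OF V_meas] by auto
  show ?thesis unfolding Fl_def by measurable
qed

lemma Q_sf: "sigma_finite_measure Q"
  using Q(1) by (rule prob_space_imp_sigma_finite)

lemma Mx_meas: "Mx t \<in> borel_measurable (F {1..t})"
proof -
  have "(\<lambda>(\<omega>, l). ennreal (Fl l t \<omega>)) \<in> borel_measurable (F {1..t} \<Otimes>\<^sub>M Q)"
    by (subst measurable_cong_sets[OF sets_pair_measure_cong[OF refl Q(2)] refl]) (rule Fl_pair_meas)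
  then show ?thesis unfolding Mx_def[abs_def]
    using sigma_finite_measure.borel_measurable_nn_integral[OF Q_sf] by simp
qed

lemma Mx0: "Mx 0 \<omega> = 1"
proof -
  interpret Qp: prob_space Q by (rule Q(1))
  have "Mx 0 \<omega> = (\<integral>\<^sup>+ l. 1 \<partial>Q)" unfolding Mx_def Fl_def S_def V_def by simp
  also have "\<dots> = 1" using Qp.emeasure_space_1 by simp
  finally show ?thesis .
qed

lemma ennreal_ind: "0 \<le> x \<Longrightarrow> ennreal (x * indicator B \<omega>) = ennreal x * indicator B \<omega>"
  by (simp add: indicator_def)

lemma Mx_step:
  assumes B: "B \<in> sets (F {1..t})"
  shows "(\<integral>\<^sup>+\<omega>. Mx (Suc t) \<omega> * indicator B \<omega> \<partial>M) \<le> (\<integral>\<^sup>+\<omega>. Mx t \<omega> * indicator B \<omega> \<partial>M)"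
proof -
  interpret Qp: prob_space Q by (rule Q(1))
  interpret pair_sigma_finite M Q
    by (intro pair_sigma_finite.intro prob_space_imp_sigma_finite Q(1)) unfold_locales
  have BM: "B \<in> sets M" using B sub_F by (auto simp: subalgebra_def)
  have pm: "(\<lambda>(\<omega>, l). ennreal (Fl l s \<omega>) * indicator B \<omega>) \<in> borel_measurable (M \<Otimes>\<^sub>M Q)" for s
  proof -
    have "(\<lambda>(\<omega>, l). ennreal (Fl l s \<omega>) * indicator B \<omega>) \<in> borel_measurable (M \<Otimes>\<^sub>M borel)"
      using Fl_pair_meas_M[of s] BM by measurable
    then show ?thesis
      by (subst measurable_cong_sets[OF sets_pair_measure_cong[OF refl Q(2)] refl])
  qed
  have lm: "(\<lambda>l. ennreal (Fl l s \<omega>)) \<in> borel_measurable Q" for s \<omega>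
  proof -
    have [measurable]: "psiE \<in> borel_measurable borel" by (rule psiE_meas)
    have "(\<lambda>l. ennreal (Fl l s \<omega>)) \<in> borel_measurable borel" unfolding Fl_def by measurable
    then show ?thesis by (subst measurable_cong_sets[OF Q(2) refl])
  qed
  have eq: "(\<integral>\<^sup>+\<omega>. Mx s \<omega> * indicator B \<omega> \<partial>M) = (\<integral>\<^sup>+l. (\<integral>\<^sup>+\<omega>. ennreal (Fl l s \<omega> * indicator B \<omega>) \<partial>M) \<partial>Q)" for s
  proof -
    have "(\<integral>\<^sup>+\<omega>. Mx s \<omega> * indicator B \<omega> \<partial>M) = (\<integral>\<^sup>+\<omega>. (\<integral>\<^sup>+l. ennreal (Fl l s \<omega>) * indicator B \<omega> \<partial>Q) \<partial>M)"
      unfolding Mx_def by (simp add: nn_integral_multc[OF lm])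
    also have "\<dots> = (\<integral>\<^sup>+l. (\<integral>\<^sup>+\<omega>. ennreal (Fl l s \<omega>) * indicator B \<omega> \<partial>M) \<partial>Q)"
      using Fubini'[OF pm[of s]] by simp
    also have "\<dots> = (\<integral>\<^sup>+l. (\<integral>\<^sup>+\<omega>. ennreal (Fl l s \<omega> * indicator B \<omega>) \<partial>M) \<partial>Q)"
      using Fl_pos by (simp add: ennreal_ind less_imp_le)
    finally show ?thesis .
  qed
  show ?thesis unfolding eq
  proof (rule nn_integral_mono_AE)
    show "AE l in Q. (\<integral>\<^sup>+\<omega>. ennreal (Fl l (Suc t) \<omega> * indicator B \<omega>) \<partial>M) \<le> (\<integral>\<^sup>+\<omega>. ennreal (Fl l t \<omega> * indicator B \<omega>) \<partial>M)"
      using Q(3) by eventually_elim (auto intro: step1[OF _ _ B])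
  qed
qed

definition cc where "cc = ennreal (1 / \<delta>T)"

definition Bs where "Bs T = {\<omega> \<in> space M. \<forall>r\<in>{..T}. Mx r \<omega> < cc}"

lemma Bs_sets: "Bs T \<in> sets (F {1..T})"
proof -
  have [measurable]: "\<And>r. r \<in> {..T} \<Longrightarrow> Mx r \<in> borel_measurable (F {1..T})"
    using Mx_meas by (auto intro: meas_F_mono[OF _ Mx_meas])
  have "Measurable.pred (F {1..T}) (\<lambda>\<omega>. \<forall>r\<in>{..T}. Mx r \<omega> < cc)" by measurable
  then show ?thesis unfolding Bs_def pred_def space_F by simp
qed

lemma Bs_M: "Bs T \<in> sets M" using Bs_sets sub_F by (auto simp: subalgebra_def)

lemma cc_gt1: "1 < cc"
  unfolding cc_def using \<delta> by (simp add: ennreal_1[symmetric] ennreal_less_iff del: ennreal_1)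


end

context pprm begin

lemma inv: "cc * emeasure M (space M - Bs T) + (\<integral>\<^sup>+\<omega>. Mx T \<omega> * indicator (Bs T) \<omega> \<partial>M) \<le> 1"
proof (induction T)
  case 0
  have "Bs 0 = space M" using Mx0 cc_gt1 by (auto simp: Bs_def)
  then show ?case using Mx0 by (simp add: emeasure_space_1)
next
  case (Suc T)
  define D where "D = Bs T - Bs (Suc T)"
  have sub: "Bs (Suc T) \<subseteq> Bs T" by (auto simp: Bs_def)
  have Dge: "cc \<le> Mx (Suc T) \<omega>" if "\<omega> \<in> D" for \<omega>
  proof -
    have a: "\<forall>r\<in>{..T}. Mx r \<omega> < cc" "\<omega> \<in> space M" using that by (auto simp: D_def Bs_def)
    then have "\<not> (\<forall>r\<in>{..Suc T}. Mx r \<omega> < cc)" using that by (auto simp: D_def Bs_def)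
    then obtain r where r: "r \<le> Suc T" "\<not> Mx r \<omega> < cc" by auto
    then have "r = Suc T" using a(1) by (auto simp: le_Suc_eq)
    then show ?thesis using r by (simp add: not_less)
  qed
  have DM: "D \<in> sets M" unfolding D_def using Bs_M by auto
  have MxM: "Mx (Suc T) \<in> borel_measurable M" using meas_F_M[OF Mx_meas] .
  have ind: "Mx (Suc T) \<omega> * indicator (Bs T) \<omega> = Mx (Suc T) \<omega> * indicator (Bs (Suc T)) \<omega> + Mx (Suc T) \<omega> * indicator D \<omega>" for \<omega>
    using sub by (auto simp: indicator_def D_def)
  have A: "(\<integral>\<^sup>+\<omega>. Mx (Suc T) \<omega> * indicator (Bs T) \<omega> \<partial>M) =
      (\<integral>\<^sup>+\<omega>. Mx (Suc T) \<omega> * indicator (Bs (Suc T)) \<omega> \<partial>M) + (\<integral>\<^sup>+\<omega>. Mx (Suc T) \<omega> * indicator D \<omega> \<partial>M)"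
    unfolding ind using MxM Bs_M DM by (intro nn_integral_add) auto
  have C: "cc * emeasure M D \<le> (\<integral>\<^sup>+\<omega>. Mx (Suc T) \<omega> * indicator D \<omega> \<partial>M)"
  proof -
    have "cc * emeasure M D = (\<integral>\<^sup>+\<omega>. cc * indicator D \<omega> \<partial>M)" using DM by (rule nn_integral_cmult_indicator[symmetric])
    also have "\<dots> \<le> (\<integral>\<^sup>+\<omega>. Mx (Suc T) \<omega> * indicator D \<omega> \<partial>M)"
      using Dge by (intro nn_integral_mono) (auto simp: indicator_def)
    finally show ?thesis .
  qed
  have em: "emeasure M (space M - Bs (Suc T)) = emeasure M (space M - Bs T) + emeasure M D"
  proof -
    have "space M - Bs (Suc T) = (space M - Bs T) \<union> D" using sub Bs_M[of T] sets.sets_into_space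
      by (auto simp: D_def Bs_def)
    moreover have "(space M - Bs T) \<inter> D = {}" by (auto simp: D_def)
    ultimately show ?thesis using Bs_M DM by (simp add: plus_emeasure)
  qed
  have st: "(\<integral>\<^sup>+\<omega>. Mx (Suc T) \<omega> * indicator (Bs T) \<omega> \<partial>M) \<le> (\<integral>\<^sup>+\<omega>. Mx T \<omega> * indicator (Bs T) \<omega> \<partial>M)"
    by (rule Mx_step[OF Bs_sets])
  have "cc * emeasure M (space M - Bs (Suc T)) + (\<integral>\<^sup>+\<omega>. Mx (Suc T) \<omega> * indicator (Bs (Suc T)) \<omega> \<partial>M)
     = cc * emeasure M (space M - Bs T) + (cc * emeasure M D + (\<integral>\<^sup>+\<omega>. Mx (Suc T) \<omega> * indicator (Bs (Suc T)) \<omega> \<partial>M))"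
    unfolding em by (simp add: distrib_left add.assoc)
  also have "\<dots> \<le> cc * emeasure M (space M - Bs T) + ((\<integral>\<^sup>+\<omega>. Mx (Suc T) \<omega> * indicator D \<omega> \<partial>M) + (\<integral>\<^sup>+\<omega>. Mx (Suc T) \<omega> * indicator (Bs (Suc T)) \<omega> \<partial>M))"
    using C by (intro add_mono order_refl)
  also have "\<dots> = cc * emeasure M (space M - Bs T) + (\<integral>\<^sup>+\<omega>. Mx (Suc T) \<omega> * indicator (Bs T) \<omega> \<partial>M)"
    unfolding A by (simp add: add.commute)
  also have "\<dots> \<le> cc * emeasure M (space M - Bs T) + (\<integral>\<^sup>+\<omega>. Mx T \<omega> * indicator (Bs T) \<omega> \<partial>M)"
    using st by (intro add_mono order_refl)
  also have "\<dots> \<le> 1" by (rule Suc.IH)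
  finally show ?case .
qed

lemma ville: "measure M (space M - Bs T) \<le> \<delta>T"
proof -
  have "cc * emeasure M (space M - Bs T) \<le> 1" using inv[of T] by (metis add_increasing2 zero_le order_trans add.commute le_iff_add)
  then have "ennreal (1 / \<delta>T) * ennreal (measure M (space M - Bs T)) \<le> 1"
    using Bs_M by (simp add: cc_def emeasure_eq_measure)
  moreover have "ennreal (1 / \<delta>T) * ennreal (measure M (space M - Bs T)) = ennreal (1 / \<delta>T * measure M (space M - Bs T))"
    using \<delta> by (intro ennreal_mult[symmetric]) auto
  ultimately have "ennreal (1 / \<delta>T * measure M (space M - Bs T)) \<le> 1" by simp
  then have "1 / \<delta>T * measure M (space M - Bs T) \<le> 1" by (simp add: ennreal_le_1)
  then show ?thesis using \<delta> by (simp add: field_simps)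
qed

lemma ville_all: "measure M (\<Union>T. space M - Bs T) \<le> \<delta>T"
proof -
  have inc: "incseq (\<lambda>T. space M - Bs T)"
    by (auto simp: incseq_def Bs_def)
  have rng: "range (\<lambda>T. space M - Bs T) \<subseteq> sets M" using Bs_M by auto
  have "emeasure M (\<Union>T. space M - Bs T) = (SUP T. emeasure M (space M - Bs T))"
    by (rule SUP_emeasure_incseq[OF rng inc, symmetric])
  also have "\<dots> \<le> ennreal \<delta>T"
    using ville Bs_M by (intro SUP_least) (simp add: emeasure_eq_measure ennreal_leI)
  finally show ?thesis using rng \<delta> by (simp add: emeasure_eq_measure sets.countable_UN' ennreal_le_iff)
qed


end

context pprm begin

lemma u_mono: assumes "V1 \<le> V2" shows "u_bound Q \<delta>T V1 \<le> u_bound Q \<delta>T V2"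
  unfolding u_bound_def
proof (rule Sup_subset_mono, safe)
  fix S assume a: "(\<integral>\<^sup>+ l. ennreal (exp (l * S - psiE l * V1)) \<partial>Q) < ennreal (1 / \<delta>T)"
  have "(\<integral>\<^sup>+ l. ennreal (exp (l * S - psiE l * V2)) \<partial>Q) \<le> (\<integral>\<^sup>+ l. ennreal (exp (l * S - psiE l * V1)) \<partial>Q)"
  proof (rule nn_integral_mono_AE)
    show "AE l in Q. ennreal (exp (l * S - psiE l * V2)) \<le> ennreal (exp (l * S - psiE l * V1))"
      using Q(3)
    proof eventually_elim
      case (elim l)
      then have "psiE l * V1 \<le> psiE l * V2" using psiE_nonneg[of l] assms by (intro mult_left_mono) auto
      then show ?case by (intro ennreal_leI) simp
    qed
  qed
  then show "\<exists>S'. ereal S = ereal S' \<and> (\<integral>\<^sup>+ l. ennreal (exp (l * S' - psiE l * V2)) \<partial>Q) < ennreal (1 / \<delta>T)"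
    using a by auto
qed

lemma u_meas: "u_bound Q \<delta>T \<in> borel_measurable borel"
proof -
  have "\<forall>a. u_bound Q \<delta>T -` {a<..} \<inter> space borel \<in> sets borel"
  proof
    fix a :: ereal
    have "is_interval (u_bound Q \<delta>T -` {a<..})"
      unfolding is_interval_1
    proof (intro ballI allI impI)
      fix x y z assume "x \<in> u_bound Q \<delta>T -` {a<..}" "y \<in> u_bound Q \<delta>T -` {a<..}" "x \<le> z \<and> z \<le> y"
      then show "z \<in> u_bound Q \<delta>T -` {a<..}" using u_mono[of x z] by auto
    qed
    then show "u_bound Q \<delta>T -` {a<..} \<inter> space borel \<in> sets borel"
      using real_interval_borel_measurable by simp
  qed
  then show ?thesis using borel_measurable_ereal_iff_Ioi by blast
qed

lemma L_meas: "L t \<in> borel_measurable M"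
proof -
  have [measurable]: "(\<lambda>\<omega>. \<Sum>t'\<in>{1..t}. Rpp t' \<omega>) \<in> borel_measurable M"
    by (intro borel_measurable_sum) (auto intro: meas_F_M[OF Rpp_meas[OF _ order_refl]])
  have [measurable]: "(\<lambda>\<omega>. u_bound Q \<delta>T (V t \<omega>)) \<in> borel_measurable M"
    using measurable_compose[OF meas_F_M[OF V_meas] u_meas] by (simp add: comp_def)
  have "L t = (\<lambda>\<omega>. ereal ((1 / real t) * (\<Sum>t'\<in>{1..t}. Rpp t' \<omega>))
          - ereal (1 + 2 * \<eta>max) * u_bound Q \<delta>T (V t \<omega>) / ereal (real t))"
    by (auto simp: L_def)
  also have "\<dots> \<in> borel_measurable M" by measurable
  finally show ?thesis .
qed

lemma kS: "(1 + 2 * \<eta>max) * S t \<omega> = (\<Sum>s\<in>{1..t}. Rpp s \<omega>) - (\<Sum>s\<in>{1..t}. R s)"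
proof -
  have "(1 + 2 * \<eta>max) * S t \<omega> = (\<Sum>s\<in>{1..t}. (1 + 2 * \<eta>max) * (Z s \<omega> - mu s))"
    unfolding S_def by (simp add: sum_distrib_left)
  also have "\<dots> = (\<Sum>s\<in>{1..t}. Rpp s \<omega> - R s)"
  proof (intro sum.cong refl)
    fix s
    have "Z s \<omega> - mu s = ((Rpp s \<omega> + \<eta>max) - (R s + \<eta>max)) / (1 + 2 * \<eta>max)"
      unfolding mu_def Z_def by (rule diff_divide_distrib[symmetric])
    then have "Z s \<omega> - mu s = (Rpp s \<omega> - R s) / (1 + 2 * \<eta>max)" by simp
    then show "(1 + 2 * \<eta>max) * (Z s \<omega> - mu s) = Rpp s \<omega> - R s" using kpos by simp
  qed
  finally show ?thesis by (simp add: sum_subtractf)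
qed

lemma alarm_imp:
  assumes om: "\<omega> \<in> space M" and t: "1 \<le> t" and La: "L t \<omega> > ereal (U0 \<omega> + \<epsilon>tol)" and R0: "R 0 \<le> U0 \<omega>"
  shows "cc \<le> Mx t \<omega>"
proof -
  define k where "k = 1 + 2 * \<eta>max"
  have k: "0 < k" using kpos by (simp add: k_def)
  define a where "a = (1 / real t) * (\<Sum>t'\<in>{1..t}. Rpp t' \<omega>)"
  have tpos: "0 < real t" using t by simp
  have avg: "a - k * S t \<omega> / real t = (1 / real t) * (\<Sum>s\<in>{1..t}. R s)"
  proof -
    have "k * S t \<omega> / real t = (1 / real t) * (\<Sum>s\<in>{1..t}. Rpp s \<omega>) - (1 / real t) * (\<Sum>s\<in>{1..t}. R s)"
      using kS[of t \<omega>] by (simp add: k_def diff_divide_distrib)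
    then show ?thesis unfolding a_def by simp
  qed
  have Rle: "(1 / real t) * (\<Sum>s\<in>{1..t}. R s) \<le> U0 \<omega> + \<epsilon>tol" using H0[OF t] R0 by simp
  have Lu: "L t \<omega> = ereal a - ereal k * u_bound Q \<delta>T (V t \<omega>) / ereal (real t)"
    by (simp add: L_def a_def k_def)
  have Sgt: "u_bound Q \<delta>T (V t \<omega>) < ereal (S t \<omega>)"
  proof (rule ccontr)
    assume "\<not> ?thesis"
    then have ge: "ereal (S t \<omega>) \<le> u_bound Q \<delta>T (V t \<omega>)" by simp
    show False
    proof (cases "u_bound Q \<delta>T (V t \<omega>)")
      case (real r)
      then have rS: "S t \<omega> \<le> r" using ge by simp
      have "L t \<omega> = ereal (a - k * r / real t)" unfolding Lu real using tpos by simp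
      moreover have "k * r / real t \<ge> k * S t \<omega> / real t"
        using rS k tpos by (intro divide_right_mono mult_left_mono) auto
      ultimately have "L t \<omega> \<le> ereal (U0 \<omega> + \<epsilon>tol)" using avg Rle by simp
      then show False using La by simp
    next
      case PInf
      then have "L t \<omega> = - \<infinity>" unfolding Lu using k tpos by simp
      then show False using La by simp
    next
      case MInf
      then show False using ge by simp
    qed
  qed
  show ?thesis
  proof (rule ccontr)
    assume "\<not> cc \<le> Mx t \<omega>"
    then have "(\<integral>\<^sup>+ l. ennreal (exp (l * S t \<omega> - psiE l * V t \<omega>)) \<partial>Q) < ennreal (1 / \<delta>T)"
      by (simp add: Mx_def Fl_def cc_def not_le)
    then have "ereal (S t \<omega>) \<in> {ereal S | S. (\<integral>\<^sup>+ l. ennreal (exp (l * S - psiE l * V t \<omega>)) \<partial>Q) < ennreal (1 / \<delta>T)}"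
      by auto
    then have "ereal (S t \<omega>) \<le> u_bound Q \<delta>T (V t \<omega>)" unfolding u_bound_def by (rule Sup_upper)
    then show False using Sgt by simp
  qed
qed

lemma main:
  "{\<omega> \<in> space M. \<exists>t\<ge>1. L t \<omega> > ereal (U0 \<omega> + \<epsilon>tol)} \<in> sets M
    \<and> prob {\<omega> \<in> space M. \<exists>t\<ge>1. L t \<omega> > ereal (U0 \<omega> + \<epsilon>tol)} \<le> \<delta>S + \<delta>T"
proof -
  let ?A = "{\<omega> \<in> space M. \<exists>t\<ge>1. L t \<omega> > ereal (U0 \<omega> + \<epsilon>tol)}"
  have U0M[measurable]: "U0 \<in> borel_measurable M" using meas_F_M[OF U0_meas] .
  have [measurable]: "\<And>t. L t \<in> borel_measurable M" by (rule L_meas)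
  have AM: "?A \<in> sets M" by measurable
  define E1 where "E1 = space M - {\<omega> \<in> space M. R 0 \<le> U0 \<omega>}"
  define E2 where "E2 = (\<Union>T. space M - Bs T)"
  have G: "{\<omega> \<in> space M. R 0 \<le> U0 \<omega>} \<in> sets M" by measurable
  have E1M: "E1 \<in> sets M" unfolding E1_def using G by auto
  have E2M: "E2 \<in> sets M" unfolding E2_def using Bs_M by auto
  have sub: "?A \<subseteq> E1 \<union> E2"
  proof
    fix \<omega> assume "\<omega> \<in> ?A"
    then obtain t where om: "\<omega> \<in> space M" and t: "1 \<le> t" and La: "L t \<omega> > ereal (U0 \<omega> + \<epsilon>tol)" by auto
    show "\<omega> \<in> E1 \<union> E2"
    proof (cases "R 0 \<le> U0 \<omega>")
      case True
      then have "cc \<le> Mx t \<omega>" by (rule alarm_imp[OF om t La])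
      then have "\<omega> \<notin> Bs t" by (auto simp: Bs_def not_less)
      then show ?thesis using om by (auto simp: E2_def)
    next
      case False then show ?thesis using om by (auto simp: E1_def)
    qed
  qed
  have p1: "prob E1 \<le> \<delta>S" unfolding E1_def using prob_compl[OF G] U0_cover by simp
  have p2: "prob E2 \<le> \<delta>T" unfolding E2_def by (rule ville_all)
  have "prob ?A \<le> prob (E1 \<union> E2)" using sub E1M E2M by (intro finite_measure_mono) auto
  also have "\<dots> \<le> prob E1 + prob E2" using E1M E2M by (rule measure_Un_le)
  finally show ?thesis using AM p1 p2 by simp
qed


end

theorem theorem3p2:
  fixes M :: "'a measure"
    and P :: "nat \<Rightarrow> ((real^('d::finite)) \<times> 'y::finite) measure"
    and f :: "real^'d \<Rightarrow> 'o" and loss :: "'o \<Rightarrow> 'y \<Rightarrow> real"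
    and fp :: "real^'d \<Rightarrow> 'y \<Rightarrow> real"
    and n N :: "nat \<Rightarrow> nat"
    and Xl Xu :: "nat \<Rightarrow> nat \<Rightarrow> 'a \<Rightarrow> real^'d" and Yl :: "nat \<Rightarrow> nat \<Rightarrow> 'a \<Rightarrow> 'y"
    and \<eta> :: "nat \<Rightarrow> 'a \<Rightarrow> real" and \<eta>max :: real
    and z0 :: real and Q :: "real measure"
    and \<delta>S \<delta>T \<epsilon>tol :: real
    and U0 :: "'a \<Rightarrow> real"
    and R :: "nat \<Rightarrow> real" and Rpp Z Zbar V :: "nat \<Rightarrow> 'a \<Rightarrow> real" and L :: "nat \<Rightarrow> 'a \<Rightarrow> ereal"
  assumes M: "prob_space M"
    and P: "\<And>t. prob_space (P t)" "\<And>t. sets (P t) = sets (borel \<Otimes>\<^sub>M count_space UNIV)"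
    and loss_range: "\<And>out y. 0 \<le> loss out y \<and> loss out y \<le> 1"
    and loss_meas: "\<And>y. (\<lambda>x. loss (f x) y) \<in> borel_measurable borel"
    and fp_meas: "\<And>c. (\<lambda>x. fp x c) \<in> borel_measurable borel"
    and sizes: "\<And>t. t \<ge> 1 \<Longrightarrow> n t \<ge> 1 \<and> N t \<ge> 1"
    and Xl_meas: "\<And>t i. (\<lambda>\<omega>. (Xl t i \<omega>, Yl t i \<omega>)) \<in> measurable M (borel \<Otimes>\<^sub>M count_space UNIV)"
    and Xu_meas: "\<And>t j. Xu t j \<in> measurable M borel"
    and lab_distr: "\<And>t i. i < n t \<Longrightarrow>
          distr M (borel \<Otimes>\<^sub>M count_space UNIV) (\<lambda>\<omega>. (Xl t i \<omega>, Yl t i \<omega>)) = P t"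
    and unl_distr: "\<And>t j. j < N t \<Longrightarrow> distr M borel (Xu t j) = distr (P t) borel fst"
    and indep: "prob_space.indep_sets M (sample_sets M Xl Yl Xu) (sample_index n N)"
    and \<eta>max: "\<eta>max > 0"
    and \<eta>_range: "\<And>t \<omega>. t \<ge> 1 \<Longrightarrow> \<omega> \<in> space M \<Longrightarrow> 0 \<le> \<eta> t \<omega> \<and> \<eta> t \<omega> \<le> \<eta>max"
    and \<eta>_pred: "\<And>t. t \<ge> 1 \<Longrightarrow> \<eta> t \<in> borel_measurable (data_sigma M Xl Yl Xu n N {1..<t})"
    and z0: "0 \<le> z0" "z0 \<le> 1"
    and \<delta>: "0 < \<delta>S" "\<delta>S < 1" "0 < \<delta>T" "\<delta>T < 1" "\<delta>S + \<delta>T < 1"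
    and Q: "prob_space Q" "sets Q = sets borel" "AE l in Q. 0 \<le> l \<and> l < 1"
    and U0_meas: "U0 \<in> borel_measurable (data_sigma M Xl Yl Xu n N {0})"
    and \<epsilon>tol: "\<epsilon>tol > 0"
    and R_def: "\<And>t. R t = (\<integral>z. loss (f (fst z)) (snd z) \<partial>P t)"
    and U0_cover: "prob_space.prob M {\<omega> \<in> space M. R 0 \<le> U0 \<omega>} \<ge> 1 - \<delta>S"
    and H0: "\<And>t. t \<ge> 1 \<Longrightarrow> (1 / real t) * (\<Sum>t'\<in>{1..t}. R t') \<le> R 0 + \<epsilon>tol"
    and Rpp_def: "\<And>t \<omega>. Rpp t \<omega> =
          \<eta> t \<omega> / real (N t) * (\<Sum>j<N t. loss (f (Xu t j \<omega>)) (synth_label fp (Xu t j \<omega>)))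
        + 1 / real (n t) * (\<Sum>i<n t. loss (f (Xl t i \<omega>)) (Yl t i \<omega>))
        - \<eta> t \<omega> / real (n t) * (\<Sum>i<n t. loss (f (Xl t i \<omega>)) (synth_label fp (Xl t i \<omega>)))"
    and Z_def: "\<And>t \<omega>. Z t \<omega> = (Rpp t \<omega> + \<eta>max) / (1 + 2 * \<eta>max)"
    and Zbar_def: "\<And>t \<omega>. Zbar t \<omega> = (if t = 0 then z0 else (1 / real t) * (\<Sum>t'\<in>{1..t}. Z t' \<omega>))"
    and V_def: "\<And>t \<omega>. V t \<omega> = (\<Sum>t'\<in>{1..t}. (Z t' \<omega> - Zbar (t' - 1) \<omega>)\<^sup>2)"
    and L_def: "\<And>t \<omega>. L t \<omega> =
          ereal ((1 / real t) * (\<Sum>t'\<in>{1..t}. Rpp t' \<omega>))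
          - ereal (1 + 2 * \<eta>max) * u_bound Q \<delta>T (V t \<omega>) / ereal (real t)"
  shows "{\<omega> \<in> space M. \<exists>t\<ge>1. L t \<omega> > ereal (U0 \<omega> + \<epsilon>tol)} \<in> sets M
    \<and> prob_space.prob M {\<omega> \<in> space M. \<exists>t\<ge>1. L t \<omega> > ereal (U0 \<omega> + \<epsilon>tol)} \<le> \<delta>S + \<delta>T"
proof -
  interpret pprm M P f loss fp n N Xl Xu Yl \<eta> \<eta>max z0 Q \<delta>S \<delta>T \<epsilon>tol U0 R Rpp Z Zbar V L
    by (rule pprm.intro) (rule assms; assumption)+
  show ?thesis by (rule main)
qed

end
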